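(* Let $\mathcal A$ be a linear time-invariant algorithm with $n$ oracles and realization $(A,B,C,D)$, let $\kappa\subseteq[n]$ with $\bar\kappa=[n]\setminus\kappa$ and $D[\kappa]$ invertible. If $\mathcal A$ converges to a fixed point $(y[\kappa]^\star,y[\bar\kappa]^\star,u[\kappa]^\star,u[\bar\kappa]^\star,x^\star)$, then its conjugate $\mathcal B=\mathcal C_\kappa\mathcal A$ converges to the fixed point $(u[\kappa]^\star,y[\bar\kappa]^\star,y[\kappa]^\star,u[\bar\kappa]^\star,x^\star)$.
   Context: $\mathcal A$ generates $x^{k+1}=Ax^k+Bu^k$, $y^k=Cx^k+Du^k$, $u^k=\phi(y^k)$, where the oracles are (sub)gradients $\partial f_i$, $i\in[n]$; $y[\kappa],u[\kappa]$ denote the components of oracle arguments/outputs belonging to oracles in $\kappa$, and $D[\kappa]$ the corresponding diagonal block of $D$. A fixed point is a tuple of oracle arguments, oracle outputs and state satisfying $x^\star=Ax^\star+Bu^\star$, $y^\star=Cx^\star+Du^\star$, $u^\star=\phi(y^\star)$ (listed as arguments, then outputs, then state). The conjugation $\mathcal C_\kappa\mathcal A$ rewrites $\mathcal A$ to call $\partial f_i^\star=(\partial f_i)^{-1}$ instead of $\partial f_i$ for $i\in\kappa$, so that for these oracles the argument and output are swapped (the new oracle argument is the old output and vice versa); its realization is obtained by solving the $\kappa$-rows of $y=Cx+Du$ for $u[\kappa]$. *)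

theory Defs
  imports "HOL-Analysis.Analysis"
begin

text \<open>Oracle arguments/outputs of all n oracles are collected in a vector of type
 'v^'n (oracle index type 'n, finite, playing the role of [n]); the state lives in 'x.
 The realization (A,B,C,D) is given by linear maps.\<close>

definition subdiff :: "('v::real_inner \<Rightarrow> real) \<Rightarrow> 'v \<Rightarrow> 'v set" where
  "subdiff f y = {g. \<forall>z. f z \<ge> f y + inner g (z - y)}"

definition subdiff_inv :: "('v::real_inner \<Rightarrow> real) \<Rightarrow> 'v \<Rightarrow> 'v set" where
  "subdiff_inv f a = {b. a \<in> subdiff f b}"

definition proj :: "'n set \<Rightarrow> ('v::zero)^'n \<Rightarrow> 'v^'n" where
  "proj \<kappa> z = (\<chi> i. if i \<in> \<kappa> then z $ i else 0)"

text \<open>The diagonal block D[kappa], as a map on vectors supported on kappa.\<close>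
definition Dblock :: "(('v::real_vector)^'n \<Rightarrow> 'v^'n) \<Rightarrow> 'n set \<Rightarrow> 'v^'n \<Rightarrow> 'v^'n" where
  "Dblock D \<kappa> w = proj \<kappa> (D (proj \<kappa> w))"

definition Dblock_invertible :: "(('v::real_vector)^'n \<Rightarrow> 'v^'n) \<Rightarrow> 'n set \<Rightarrow> bool" where
  "Dblock_invertible D \<kappa> \<longleftrightarrow> bij_betw (Dblock D \<kappa>) (range (proj \<kappa>)) (range (proj \<kappa>))"

definition Dinv :: "(('v::real_vector)^'n \<Rightarrow> 'v^'n) \<Rightarrow> 'n set \<Rightarrow> 'v^'n \<Rightarrow> 'v^'n" where
  "Dinv D \<kappa> z = inv_into (range (proj \<kappa>)) (Dblock D \<kappa>) (proj \<kappa> z)"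

text \<open>Realization of the conjugate C_kappa A, obtained by solving the kappa-rows of
  y = C x + D u for u[kappa]:
  u[kappa] = D[kappa]^{-1} (u'[kappa] - C[kappa] x - D[kappa,kbar] u'[kbar]),
  where u' = (y[kappa], u[kbar]) is the new oracle output and y' = (u[kappa], y[kbar]) the new argument.\<close>
definition conjA :: "('x \<Rightarrow> 'x::real_vector) \<Rightarrow> (('v::real_vector)^'n \<Rightarrow> 'x) \<Rightarrow> ('x \<Rightarrow> 'v^'n)
    \<Rightarrow> ('v^'n \<Rightarrow> 'v^'n) \<Rightarrow> 'n set \<Rightarrow> 'x \<Rightarrow> 'x" where
  "conjA A B C D \<kappa> x = A x - B (Dinv D \<kappa> (C x))"

definition conjB :: "(('v::real_vector)^'n \<Rightarrow> 'x::real_vector) \<Rightarrow> ('v^'n \<Rightarrow> 'v^'n) \<Rightarrow> 'n set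
    \<Rightarrow> 'v^'n \<Rightarrow> 'x" where
  "conjB B D \<kappa> w = B (Dinv D \<kappa> (w - D (proj (- \<kappa>) w)) + proj (- \<kappa>) w)"

definition conjC :: "('x::real_vector \<Rightarrow> ('v::real_vector)^'n) \<Rightarrow> ('v^'n \<Rightarrow> 'v^'n) \<Rightarrow> 'n set
    \<Rightarrow> 'x \<Rightarrow> 'v^'n" where
  "conjC C D \<kappa> x = - Dinv D \<kappa> (C x) + proj (- \<kappa>) (C x - D (Dinv D \<kappa> (C x)))"

definition conjD :: "(('v::real_vector)^'n \<Rightarrow> 'v^'n) \<Rightarrow> 'n set \<Rightarrow> 'v^'n \<Rightarrow> 'v^'n" where
  "conjD D \<kappa> w = Dinv D \<kappa> (w - D (proj (- \<kappa>) w))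
      + proj (- \<kappa>) (D (Dinv D \<kappa> (w - D (proj (- \<kappa>) w)) + proj (- \<kappa>) w))"

definition is_trajectory ::
  "('x::real_vector \<Rightarrow> 'x) \<Rightarrow> (('v::real_vector)^'n \<Rightarrow> 'x) \<Rightarrow> ('x \<Rightarrow> 'v^'n) \<Rightarrow> ('v^'n \<Rightarrow> 'v^'n)
   \<Rightarrow> ('n \<Rightarrow> 'v \<Rightarrow> 'v set) \<Rightarrow> 'x \<Rightarrow> (nat \<Rightarrow> 'v^'n) \<Rightarrow> (nat \<Rightarrow> 'v^'n) \<Rightarrow> (nat \<Rightarrow> 'x) \<Rightarrow> bool" where
    "is_trajectory A B C D \<Phi> x0 y u x \<longleftrightarrow>
     x 0 = x0 \<and>
     (\<forall>k. x (Suc k) = A (x k) + B (u k)) \<and>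
     (\<forall>k. y k = C (x k) + D (u k)) \<and>
     (\<forall>k i. u k $ i \<in> \<Phi> i (y k $ i))"

definition is_fixed_point ::
  "('x::real_vector \<Rightarrow> 'x) \<Rightarrow> (('v::real_vector)^'n \<Rightarrow> 'x) \<Rightarrow> ('x \<Rightarrow> 'v^'n) \<Rightarrow> ('v^'n \<Rightarrow> 'v^'n)
   \<Rightarrow> ('n \<Rightarrow> 'v \<Rightarrow> 'v set) \<Rightarrow> 'v^'n \<Rightarrow> 'v^'n \<Rightarrow> 'x \<Rightarrow> bool" where
  "is_fixed_point A B C D \<Phi> ys us xs \<longleftrightarrow>
     xs = A xs + B us \<and> ys = C xs + D us \<and> (\<forall>i. us $ i \<in> \<Phi> i (ys $ i))"

definition converges_to ::
  "('x::real_normed_vector \<Rightarrow> 'x) \<Rightarrow> (('v::real_normed_vector)^'n \<Rightarrow> 'x) \<Rightarrow> ('x \<Rightarrow> 'v^'n) \<Rightarrow> ('v^'n \<Rightarrow> 'v^'n)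
   \<Rightarrow> ('n \<Rightarrow> 'v \<Rightarrow> 'v set) \<Rightarrow> 'x \<Rightarrow> 'v^'n \<Rightarrow> 'v^'n \<Rightarrow> 'x \<Rightarrow> bool" where
  "converges_to A B C D \<Phi> x0 ys us xs \<longleftrightarrow>
     is_fixed_point A B C D \<Phi> ys us xs \<and>
     (\<forall>y u x. is_trajectory A B C D \<Phi> x0 y u x \<longrightarrow>
        y \<longlonglongrightarrow> ys \<and> u \<longlonglongrightarrow> us \<and> x \<longlonglongrightarrow> xs)"

definition oraclesA :: "('n \<Rightarrow> 'v::real_inner \<Rightarrow> real) \<Rightarrow> 'n \<Rightarrow> 'v \<Rightarrow> 'v set" where
  "oraclesA f i = subdiff (f i)"

definition oraclesConj :: "'n set \<Rightarrow> ('n \<Rightarrow> 'v::real_inner \<Rightarrow> real) \<Rightarrow> 'n \<Rightarrow> 'v \<Rightarrow> 'v set" where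
  "oraclesConj \<kappa> f i = (if i \<in> \<kappa> then subdiff_inv (f i) else subdiff (f i))"

end

theory Submission
  imports Defs
begin

lemma proj_add: "proj k (a + b) = proj k a + proj k (b::('v::real_vector)^'n)"
  by (simp add: proj_def vec_eq_iff)
lemma proj_diff: "proj k (a - b) = proj k a - proj k (b::('v::real_vector)^'n)"
  by (simp add: proj_def vec_eq_iff)
lemma proj_neg: "proj k (- a) = - proj k (a::('v::real_vector)^'n)"
  by (simp add: proj_def vec_eq_iff)
lemma proj_idem: "proj k (proj k z) = proj k (z::('v::real_vector)^'n)"
  by (simp add: proj_def vec_eq_iff)
lemma proj_comp1: "proj k (proj (- k) z) = (0::('v::real_vector)^'n)"
  by (simp add: proj_def vec_eq_iff)
lemma proj_comp2: "proj (- k) (proj k z) = (0::('v::real_vector)^'n)"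
  by (simp add: proj_def vec_eq_iff)
lemma proj_split: "proj k z + proj (- k) z = (z::('v::real_vector)^'n)"
  by (simp add: proj_def vec_eq_iff)
lemma proj_zero: "proj k 0 = (0::('v::real_vector)^'n)"
  by (simp add: proj_def vec_eq_iff)
lemma proj_linear: "linear (proj k :: ('v::real_vector)^'n \<Rightarrow> _)"
  by (rule linearI) (simp_all add: proj_def vec_eq_iff)

lemmas proj_simps = proj_add proj_diff proj_neg proj_idem proj_comp1 proj_comp2 proj_zero

context
  fixes D :: "('v::real_vector)^'n \<Rightarrow> 'v^'n" and k :: "'n set"
  assumes linD: "linear D" and inv: "Dblock_invertible D k"
begin

lemma Dinv_in: "proj k (Dinv D k z) = Dinv D k z"
proof -
  have b: "bij_betw (inv_into (range (proj k)) (Dblock D k)) (range (proj k)) (range (proj k))"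
    using inv unfolding Dblock_invertible_def by (rule bij_betw_inv_into)
  have "Dinv D k z \<in> range (proj k)"
    unfolding Dinv_def using bij_betwE[OF b] by blast
  then obtain v where "Dinv D k z = proj k v" by blast
  then show ?thesis by (simp add: proj_idem)
qed

lemma Dblock_Dinv: "Dblock D k (Dinv D k z) = proj k z"
proof -
  have "Dblock D k ` range (proj k) = range (proj k)"
    using inv unfolding Dblock_invertible_def bij_betw_def by blast
  then have "proj k z \<in> Dblock D k ` range (proj k)" by blast
  then show ?thesis unfolding Dinv_def by (rule f_inv_into_f)
qed

lemma Dinv_unique: assumes "proj k w = w" "Dblock D k w = proj k z" shows "w = Dinv D k z"
proof -
  have i: "inj_on (Dblock D k) (range (proj k))"
    using inv unfolding Dblock_invertible_def bij_betw_def by blast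
  have "w \<in> range (proj k)" using assms(1) by (metis rangeI)
  then have "inv_into (range (proj k)) (Dblock D k) (Dblock D k w) = w"
    using i by (simp add: inv_into_f_f)
  then show ?thesis using assms(2) by (simp add: Dinv_def)
qed

lemma Dinv_proj: "Dinv D k (proj k z) = Dinv D k z"
  by (simp add: Dinv_def proj_idem)

lemma Dinv_out: "proj (- k) (Dinv D k z) = 0"
  by (metis Dinv_in proj_comp2)

lemma Dinv_diff: "Dinv D k (a - b) = Dinv D k a - Dinv D k b"
proof -
  have "Dblock D k (Dinv D k a - Dinv D k b) = proj k (a - b)"
    using Dblock_Dinv[of a] Dblock_Dinv[of b]
    by (simp add: Dblock_def proj_simps linear_diff[OF linD])
  moreover have "proj k (Dinv D k a - Dinv D k b) = Dinv D k a - Dinv D k b"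
    by (simp add: proj_diff Dinv_in)
  ultimately show ?thesis using Dinv_unique by metis
qed


lemma charA: assumes linC: "linear C" and "y = C x + D u"
  shows "proj k u = Dinv D k (y - C x - D (proj (- k) u))"
proof (rule Dinv_unique)
  show "proj k (proj k u) = proj k u" by (simp add: proj_idem)
  have "u - proj (- k) u = proj k u" using proj_split[of k u] by (simp add: algebra_simps)
  then have "D u - D (proj (- k) u) = D (proj k u)" by (metis linear_diff[OF linD])
  then show "Dblock D k (proj k u) = proj k (y - C x - D (proj (- k) u))"
    using assms(2) by (simp add: Dblock_def proj_idem)
qed

lemma charB: assumes linC: "linear C" and h1: "proj k u = Dinv D k (y - C x - D (proj (- k) u))"
  and h2: "proj (- k) y = proj (- k) (C x + D u)"
  shows "y = C x + D u"
proof -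
  have "D u = D (proj k u) + D (proj (- k) u)"
    using proj_split[of k u] by (metis linear_add[OF linD])
  then have "proj k (C x + D u) = proj k (C x) + Dblock D k (proj k u) + proj k (D (proj (- k) u))"
    by (simp add: Dblock_def proj_add proj_idem)
  also have "Dblock D k (proj k u) = proj k (y - C x - D (proj (- k) u))"
    using h1 Dblock_Dinv by simp
  finally have "proj k (C x + D u) = proj k y" by (simp add: proj_simps)
  then show ?thesis using h2 proj_split[of k y] proj_split[of k "C x + D u"] by metis
qed

lemma conj_equiv:
  fixes C :: "'x::real_vector \<Rightarrow> 'v^'n" and u' y' :: "'v^'n" and x :: 'x and A :: "'x \<Rightarrow> 'x" and B :: "'v^'n \<Rightarrow> 'x"
  assumes linC: "linear C" and linB: "linear B"
  defines "u \<equiv> proj k y' + proj (- k) u'" and "y \<equiv> proj k u' + proj (- k) y'"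
  shows "(y' = conjC C D k x + conjD D k u') \<longleftrightarrow> (y = C x + D u)"
    and "y = C x + D u \<Longrightarrow> conjA A B C D k x + conjB B D k u' = A x + B u"
proof -
  define a where "a = Dinv D k (u' - D (proj (- k) u'))"
  define c where "c = Dinv D k (C x)"
  have Pu: "proj k u = proj k y'" and Qu: "proj (- k) u = proj (- k) u'"
    and Py: "proj k y = proj k u'" and Qy: "proj (- k) y = proj (- k) y'"
    by (simp_all add: u_def y_def proj_simps)
  have Pa: "proj k a = a" "proj (- k) a = 0" and Pc: "proj k c = c" "proj (- k) c = 0"
    by (simp_all add: a_def c_def Dinv_in Dinv_out)
  have E: "conjC C D k x + conjD D k u' = - c + proj (- k) (C x - D c) + a + proj (- k) (D (a + proj (- k) u'))"
    by (simp add: conjC_def conjD_def a_def c_def algebra_simps)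
  have PE: "proj k (conjC C D k x + conjD D k u') = a - c"
    unfolding E by (simp add: proj_simps Pa Pc)
  have QE: "proj (- k) (conjC C D k x + conjD D k u') = proj (- k) (C x + D (a - c + proj (- k) u'))"
  proof -
    have hh: "D (a + proj (- k) u') = D c + D (a - c + proj (- k) u')"
    proof -
      have "c + (a - c + proj (- k) u') = a + proj (- k) u'" by simp
      then show ?thesis using linear_add[OF linD, of c "a - c + proj (- k) u'"] by simp
    qed
    show ?thesis unfolding E hh by (simp add: proj_simps Pa Pc algebra_simps)
  qed
  have DI: "Dinv D k (y - C x - D (proj (- k) u)) = a - c"
  proof -
    have "Dinv D k (y - C x - D (proj (- k) u)) = Dinv D k (proj k (y - C x - D (proj (- k) u)))"
      by (simp add: Dinv_proj)
    also have "proj k (y - C x - D (proj (- k) u)) = proj k (u' - D (proj (- k) u') - C x)"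
      by (simp add: proj_simps Py Qu)
    also have "Dinv D k \<dots> = a - c"
      by (simp add: Dinv_proj Dinv_diff a_def c_def)
    finally show ?thesis .
  qed
  have split: "\<And>p q :: 'v^'n. p = q \<longleftrightarrow> proj k p = proj k q \<and> proj (- k) p = proj (- k) q"
    by (metis proj_split)
  show "(y' = conjC C D k x + conjD D k u') \<longleftrightarrow> (y = C x + D u)"
  proof
    assume h: "y' = conjC C D k x + conjD D k u'"
    have "proj k u = a - c" using PE h Pu by simp
    moreover have "u = a - c + proj (- k) u'" using Pu Qu PE h split[of u "a - c + proj (- k) u'"]
      by (simp add: proj_simps Pa Pc)
    ultimately show "y = C x + D u" using charB[OF linC, of u y x] DI QE h Qy by simp
  next
    assume h: "y = C x + D u"
    have p1: "proj k y' = a - c" using charA[OF linC h] DI Pu by simp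
    have "u = a - c + proj (- k) u'" using Pu Qu p1 split[of u "a - c + proj (- k) u'"]
      by (simp add: proj_simps Pa Pc)
    then have "proj (- k) y' = proj (- k) (C x + D (a - c + proj (- k) u'))"
      using h Qy by (metis)
    then show "y' = conjC C D k x + conjD D k u'" using p1 PE QE split by metis
  qed
  assume h: "y = C x + D u"
  have p1: "proj k y' = a - c" using charA[OF linC h] DI Pu by simp
  have uu: "u = a - c + proj (- k) u'" using Pu Qu p1 split[of u "a - c + proj (- k) u'"]
    by (simp add: proj_simps Pa Pc)
  show "conjA A B C D k x + conjB B D k u' = A x + B u"
    unfolding uu conjA_def conjB_def a_def[symmetric] c_def[symmetric]
    using linear_add[OF linB] linear_diff[OF linB] by (simp add: algebra_simps)
qed

end


lemma proj_tendsto: "X \<longlonglongrightarrow> L \<Longrightarrow> (\<lambda>n. proj k (X n)) \<longlonglongrightarrow> proj k (L::('v::real_normed_vector)^'n)"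
  unfolding proj_def
proof (intro tendsto_vec_lambda)
  fix i assume "X \<longlonglongrightarrow> L"
  then show "(\<lambda>n. if i \<in> k then X n $ i else 0) \<longlonglongrightarrow> (if i \<in> k then L $ i else 0)"
    by (cases "i \<in> k") (simp_all add: tendsto_vec_nth)
qed

theorem proposition8p3:
  fixes A :: "'x::euclidean_space \<Rightarrow> 'x"
    and B :: "('v::euclidean_space)^'n::finite \<Rightarrow> 'x"
    and C :: "'x \<Rightarrow> 'v^'n"
    and D :: "'v^'n \<Rightarrow> 'v^'n"
    and f :: "'n \<Rightarrow> 'v \<Rightarrow> real"
    and \<kappa> :: "'n set"
    and x0 xs :: 'x
    and ys us :: "'v^'n"
  assumes "linear A" "linear B" "linear C" "linear D"
    and "Dblock_invertible D \<kappa>"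
    and "converges_to A B C D (oraclesA f) x0 ys us xs"
  shows "converges_to (conjA A B C D \<kappa>) (conjB B D \<kappa>) (conjC C D \<kappa>) (conjD D \<kappa>)
           (oraclesConj \<kappa> f) x0
           (proj \<kappa> us + proj (- \<kappa>) ys) (proj \<kappa> ys + proj (- \<kappa>) us) xs"
proof -
  note CE = conj_equiv[OF assms(4,5,3,2)]
  have fp: "is_fixed_point A B C D (oraclesA f) ys us xs"
    and conv: "\<And>y u x. is_trajectory A B C D (oraclesA f) x0 y u x \<Longrightarrow>
        y \<longlonglongrightarrow> ys \<and> u \<longlonglongrightarrow> us \<and> x \<longlonglongrightarrow> xs"
    using assms(6) unfolding converges_to_def by auto
  have orc: "\<And>a b i. (b $ i \<in> oraclesConj \<kappa> f i (a $ i)) \<longleftrightarrow>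
      ((proj \<kappa> a + proj (- \<kappa>) b) $ i \<in> oraclesA f i ((proj \<kappa> b + proj (- \<kappa>) a) $ i))"
    by (auto simp: oraclesConj_def oraclesA_def subdiff_inv_def proj_def)
  let ?ys = "proj \<kappa> us + proj (- \<kappa>) ys" and ?us = "proj \<kappa> ys + proj (- \<kappa>) us"
  have bu: "proj \<kappa> ?ys + proj (- \<kappa>) ?us = us" "proj \<kappa> ?us + proj (- \<kappa>) ?ys = ys"
    by (simp_all add: proj_simps proj_split)
  have fp2: "is_fixed_point (conjA A B C D \<kappa>) (conjB B D \<kappa>) (conjC C D \<kappa>) (conjD D \<kappa>)
           (oraclesConj \<kappa> f) ?ys ?us xs"
  proof -
    have e: "ys = C xs + D us" "xs = A xs + B us" "\<And>i. us $ i \<in> oraclesA f i (ys $ i)"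
      using fp unfolding is_fixed_point_def by auto
    have 1: "?ys = conjC C D \<kappa> xs + conjD D \<kappa> ?us"
      using CE(1)[where y'="?ys" and u'="?us" and x=xs] e(1) bu by simp
    have 2: "conjA A B C D \<kappa> xs + conjB B D \<kappa> ?us = xs"
      using CE(2)[where y'="?ys" and u'="?us" and x=xs and A=A] e bu by simp
    have 3: "\<And>i. ?us $ i \<in> oraclesConj \<kappa> f i (?ys $ i)"
      using orc e(3) bu by metis
    show ?thesis unfolding is_fixed_point_def using 1 2 3 by simp
  qed
  show ?thesis unfolding converges_to_def
  proof (intro conjI allI impI fp2)
    fix y' u' x assume tr: "is_trajectory (conjA A B C D \<kappa>) (conjB B D \<kappa>) (conjC C D \<kappa>) (conjD D \<kappa>)
           (oraclesConj \<kappa> f) x0 y' u' x"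
    define u where "u = (\<lambda>n. proj \<kappa> (y' n) + proj (- \<kappa>) (u' n))"
    define y where "y = (\<lambda>n. proj \<kappa> (u' n) + proj (- \<kappa>) (y' n))"
    have t: "x 0 = x0" "\<And>n. x (Suc n) = conjA A B C D \<kappa> (x n) + conjB B D \<kappa> (u' n)"
      "\<And>n. y' n = conjC C D \<kappa> (x n) + conjD D \<kappa> (u' n)"
      "\<And>n i. u' n $ i \<in> oraclesConj \<kappa> f i (y' n $ i)"
      using tr unfolding is_trajectory_def by auto
    have yy: "\<And>n. y n = C (x n) + D (u n)"
      using CE(1) t(3) unfolding u_def y_def by blast
    have "is_trajectory A B C D (oraclesA f) x0 y u x"
      unfolding is_trajectory_def
    proof (intro conjI allI)
      show "x 0 = x0" by (rule t(1))
      fix n show "x (Suc n) = A (x n) + B (u n)"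
        using t(2)[of n] CE(2)[where y'="y' n" and u'="u' n" and x="x n" and A=A] yy[of n] unfolding u_def y_def by simp
      show "y n = C (x n) + D (u n)" by (rule yy)
    next
      fix n i show "u n $ i \<in> oraclesA f i (y n $ i)"
        using orc t(4) unfolding u_def y_def by metis
    qed
    then have c: "y \<longlonglongrightarrow> ys" "u \<longlonglongrightarrow> us" "x \<longlonglongrightarrow> xs" using conv by auto
    have y'e: "y' = (\<lambda>n. proj \<kappa> (u n) + proj (- \<kappa>) (y n))"
      and u'e: "u' = (\<lambda>n. proj \<kappa> (y n) + proj (- \<kappa>) (u n))"
      by (simp_all add: u_def y_def proj_simps proj_split)
    show "y' \<longlonglongrightarrow> ?ys" unfolding y'e by (intro tendsto_add proj_tendsto c)
    show "u' \<longlonglongrightarrow> ?us" unfolding u'e by (intro tendsto_add proj_tendsto c)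
    show "x \<longlonglongrightarrow> xs" by (rule c)
  qed
qed

end
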